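(* Let $q$ be a prime power, $n\ge 1$, and $k\ge1$ an integer with $q>2k+1$. Then \[\dim(\operatorname{Hull}(C_{n,k}^q))=\dim(C_{n,k}^q)-1=\binom{n+k}{k}-1.\] Moreover, $\{\operatorname{ev}(m)\}_{m\in\mathcal{M}}$ is a basis of $\operatorname{Hull}(C_{n,k}^q)$, where $\mathcal{M}$ is the set of all monomials of degree $k$ in $x_0,\dots,x_n$ other than $x_n^k$.
   Context: For a prime power $q$ and integers $n\ge 1$, $k\ge 0$, the projective Reed-Muller code $C_{n,k}^q\subseteq \mathbb{F}_q^N$, $N=\frac{q^{n+1}-1}{q-1}$, is defined as follows. For each point of $\mathbb{P}^n(\mathbb{F}_q)$ choose the affine representative $(p_0,\dots,p_n)\in\mathbb{F}_q^{n+1}\setminus\{0\}$ whose left-most nonzero coordinate equals $1$, and fix an ordering $P_1',\dots,P_N'$ of these representatives; for a polynomial $F$ write $\operatorname{ev}(F)=(F(P_1'),\dots,F(P_N'))$. Then $C_{n,k}^q=\{\operatorname{ev}(F) : F\in \mathbb{F}_q[x_0,\dots,x_n]_k\}$, where $\mathbb{F}_q[x_0,\dots,x_n]_k$ is the space of homogeneous polynomials of degree $k$ together with $0$. Duals are with respect to the standard dot product, and $\operatorname{Hull}(C)=C\cap C^\perp$. *)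

theory Defs
  imports Complex_Main "HOL-Library.Function_Algebras"
begin

text \<open>Points of P^n(F_q) are represented by their normalized affine representatives
p :: nat => 'a with p i = 0 for i > n, p not identically zero on 0..n, and
left-most nonzero coordinate equal to 1. Words of F_q^N are functions from
these representatives to 'a (zero outside the set of representatives).\<close>

definition proj_pts :: "nat \<Rightarrow> (nat \<Rightarrow> 'a::field) set" where
  "proj_pts n = {p. (\<forall>i>n. p i = 0) \<and> (\<exists>i\<le>n. p i \<noteq> 0) \<and>
                    p (LEAST i. p i \<noteq> 0) = 1}"

definition hmonos :: "nat \<Rightarrow> nat \<Rightarrow> (nat \<Rightarrow> nat) set" where
  "hmonos n k = {e. (\<forall>i>n. e i = 0) \<and> (\<Sum>i\<le>n. e i) = k}"

definition mono_eval :: "nat \<Rightarrow> (nat \<Rightarrow> nat) \<Rightarrow> (nat \<Rightarrow> 'a::field) \<Rightarrow> 'a" where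
  "mono_eval n e p = (\<Prod>i\<le>n. p i ^ e i)"

definition hom_eval :: "nat \<Rightarrow> nat \<Rightarrow> ((nat \<Rightarrow> nat) \<Rightarrow> 'a::field) \<Rightarrow> (nat \<Rightarrow> 'a) \<Rightarrow> 'a" where
  "hom_eval n k c p = (\<Sum>e\<in>hmonos n k. c e * mono_eval n e p)"

definition ev :: "nat \<Rightarrow> ((nat \<Rightarrow> 'a::field) \<Rightarrow> 'a) \<Rightarrow> ((nat \<Rightarrow> 'a) \<Rightarrow> 'a)" where
  "ev n F = (\<lambda>P. if P \<in> proj_pts n then F P else 0)"

definition PRM :: "nat \<Rightarrow> nat \<Rightarrow> ((nat \<Rightarrow> 'a::field) \<Rightarrow> 'a) set" where
  "PRM n k = {ev n (hom_eval n k c) | c. True}"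

definition words :: "nat \<Rightarrow> ((nat \<Rightarrow> 'a::field) \<Rightarrow> 'a) set" where
  "words n = {v. \<forall>P. P \<notin> proj_pts n \<longrightarrow> v P = 0}"

definition dotp :: "nat \<Rightarrow> ((nat \<Rightarrow> 'a::field) \<Rightarrow> 'a) \<Rightarrow> ((nat \<Rightarrow> 'a) \<Rightarrow> 'a) \<Rightarrow> 'a" where
  "dotp n u v = (\<Sum>P\<in>proj_pts n. u P * v P)"

definition dual_code :: "nat \<Rightarrow> ((nat \<Rightarrow> 'a::field) \<Rightarrow> 'a) set \<Rightarrow> ((nat \<Rightarrow> 'a) \<Rightarrow> 'a) set" where
  "dual_code n C = {v \<in> words n. \<forall>u\<in>C. dotp n u v = 0}"

definition code_hull :: "nat \<Rightarrow> ((nat \<Rightarrow> 'a::field) \<Rightarrow> 'a) set \<Rightarrow> ((nat \<Rightarrow> 'a) \<Rightarrow> 'a) set" where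
  "code_hull n C = C \<inter> dual_code n C"

definition fscale :: "'a::field \<Rightarrow> ('b \<Rightarrow> 'a) \<Rightarrow> ('b \<Rightarrow> 'a)" where
  "fscale c f = (\<lambda>x. c * f x)"

lemma vector_space_fscale: "vector_space (fscale :: 'a::field \<Rightarrow> ('b \<Rightarrow> 'a) \<Rightarrow> _)"
  by unfold_locales (auto simp: fscale_def algebra_simps)

end

theory Submission imports Defs "HOL-Computational_Algebra.Polynomial" "HOL-Library.FuncSet" "HOL-Library.Cardinality"
begin

lemma card_of_nat_zero: "of_nat CARD('a) = (0::'a::{field,finite})"
proof -
  have "(\<Sum>t\<in>(UNIV::'a set). t) = (\<Sum>t\<in>UNIV. t + 1)"
    by (rule sum.reindex_bij_witness[of _ "\<lambda>t. t + 1" "\<lambda>t. t - 1"]) auto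
  also have "\<dots> = (\<Sum>t\<in>UNIV. t) + of_nat CARD('a)"
    by (simp add: sum.distrib)
  finally show ?thesis by simp
qed

lemma power_sum_zero:
  assumes "a < CARD('a) - 1"
  shows "(\<Sum>t\<in>(UNIV::'a::{field,finite} set). t ^ a) = 0"
proof (cases "a = 0")
  case True then show ?thesis using card_of_nat_zero by simp
next
  case False
  define p :: "'a poly" where "p = monom 1 a - 1"
  have cp: "coeff p a = 1" using False by (simp add: p_def)
  hence "p \<noteq> 0" by auto
  have "degree p \<le> a" unfolding p_def
    by (intro degree_diff_le) (auto simp: degree_monom_le)
  have roots: "card {x. poly p x = 0} \<le> a"
    using card_poly_roots_bound[OF \<open>p \<noteq> 0\<close>] \<open>degree p \<le> a\<close> by linarith
  have "\<exists>g. g \<noteq> 0 \<and> g ^ a \<noteq> (1::'a)"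
  proof (rule ccontr)
    assume "\<not> ?thesis"
    hence "UNIV - {0} \<subseteq> {x. poly p x = 0}" by (auto simp: p_def poly_monom)
    hence "card (UNIV - {0::'a}) \<le> card {x. poly p x = 0}" by (intro card_mono) auto
    moreover have "card (UNIV - {0::'a}) = CARD('a) - 1" by (simp add: card_Diff_singleton)
    ultimately show False using roots assms by linarith
  qed
  then obtain g :: 'a where g: "g \<noteq> 0" "g ^ a \<noteq> 1" by blast
  define S where "S = (\<Sum>t\<in>(UNIV::'a set). t ^ a)"
  have "S = (\<Sum>t\<in>UNIV. (g * t) ^ a)" unfolding S_def
    by (rule sum.reindex_bij_witness[of _ "\<lambda>t. g * t" "\<lambda>t. t / g"]) (use g in auto)
  also have "\<dots> = g ^ a * S" by (simp add: S_def power_mult_distrib sum_distrib_left)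
  finally have "(g ^ a - 1) * S = 0" by (simp add: algebra_simps)
  with g show ?thesis unfolding S_def by simp
qed

lemma univ_poly_zero:
  assumes "\<And>t::'a::{field,finite}. (\<Sum>d<CARD('a). b d * t ^ d) = 0" and "d < CARD('a)"
  shows "b d = 0"
proof -
  define p :: "'a poly" where "p = (\<Sum>d<CARD('a). monom (b d) d)"
  have cp: "coeff p i = (if i < CARD('a) then b i else 0)" for i
    by (simp add: p_def coeff_sum coeff_monom)
  have pp: "poly p t = 0" for t using assms(1)[of t] by (simp add: p_def poly_sum poly_monom)
  have "p = 0"
  proof (rule ccontr)
    assume "p \<noteq> 0"
    have "degree p \<le> CARD('a) - 1" by (rule degree_le) (auto simp: cp)
    moreover have "card {x. poly p x = 0} \<le> degree p" by (rule card_poly_roots_bound) fact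
    moreover have "{x. poly p x = 0} = UNIV" using pp by auto
    ultimately have "CARD('a) \<le> degree p" "degree p \<le> CARD('a) - 1" by simp_all
    moreover have "CARD('a) > 0" by (simp add: card_gt_0_iff)
    ultimately show False by linarith
  qed
  thus ?thesis using cp[of d] assms(2) by simp
qed


lemma multi_zero:
  fixes c :: "(nat \<Rightarrow> nat) \<Rightarrow> 'a::{field,finite}"
  assumes "finite V"
  shows "finite A \<Longrightarrow> (\<forall>e\<in>A. \<forall>i. i \<notin> V \<longrightarrow> e i = g i) \<Longrightarrow> (\<forall>e\<in>A. \<forall>i\<in>V. e i < CARD('a))
    \<Longrightarrow> (\<forall>p. (\<Sum>e\<in>A. c e * (\<Prod>i\<in>V. p i ^ e i)) = 0) \<Longrightarrow> e \<in> A \<Longrightarrow> c e = 0"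
using assms proof (induction V arbitrary: A g e rule: finite_induct)
  case empty
  have "\<forall>e'\<in>A. e' = g" using empty.prems(2) by auto
  hence eg: "e = g" using empty.prems(5) by blast
  have "A = {e}"
  proof
    show "A \<subseteq> {e}" using \<open>\<forall>e'\<in>A. e' = g\<close> eg by auto
    show "{e} \<subseteq> A" using empty.prems(5) by auto
  qed
  thus ?case using empty.prems(4) by simp
next
  case (insert v V)
  define Ad where "Ad d = {e'\<in>A. e' v = d}" for d
  have fin: "finite (Ad d)" for d using insert.prems(1) by (simp add: Ad_def)
  have vanish: "\<forall>p. (\<Sum>e'\<in>Ad (e v). c e' * (\<Prod>i\<in>V. p i ^ e' i)) = 0"
  proof
    fix p :: "nat \<Rightarrow> 'a"
    define b where "b d = (\<Sum>e'\<in>Ad d. c e' * (\<Prod>i\<in>V. p i ^ e' i))" for d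
    have "(\<Sum>d<CARD('a). b d * t ^ d) = 0" for t
    proof -
      have "(\<Sum>d<CARD('a). b d * t ^ d)
          = (\<Sum>d<CARD('a). \<Sum>e'\<in>{x. x \<in> A \<and> x v = d}. c e' * (\<Prod>i\<in>V. p i ^ e' i) * t ^ e' v)"
        unfolding b_def Ad_def by (simp add: sum_distrib_right)
      also have "\<dots> = (\<Sum>e'\<in>A. c e' * (\<Prod>i\<in>V. p i ^ e' i) * t ^ e' v)"
        by (rule sum.group) (use insert.prems(1,3) in auto)
      also have "\<dots> = (\<Sum>e'\<in>A. c e' * (\<Prod>i\<in>insert v V. (p(v:=t)) i ^ e' i))"
      proof (rule sum.cong[OF refl])
        fix e' assume "e' \<in> A"
        have "(\<Prod>i\<in>insert v V. (p(v:=t)) i ^ e' i) = t ^ e' v * (\<Prod>i\<in>V. (p(v:=t)) i ^ e' i)"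
          using insert.hyps by simp
        also have "(\<Prod>i\<in>V. (p(v:=t)) i ^ e' i) = (\<Prod>i\<in>V. p i ^ e' i)"
          by (rule prod.cong) (use insert.hyps in auto)
        finally show "c e' * (\<Prod>i\<in>V. p i ^ e' i) * t ^ e' v = c e' * (\<Prod>i\<in>insert v V. (p(v:=t)) i ^ e' i)"
          by (simp add: algebra_simps)
      qed
      also have "\<dots> = 0" using insert.prems(4) by blast
      finally show ?thesis .
    qed
    hence "b (e v) = 0" by (rule univ_poly_zero) (use insert.prems(3,5) in auto)
    thus "(\<Sum>e'\<in>Ad (e v). c e' * (\<Prod>i\<in>V. p i ^ e' i)) = 0" by (simp add: b_def)
  qed
  show ?case
  proof (rule insert.IH[OF fin _ _ vanish])
    show "\<forall>e'\<in>Ad (e v). \<forall>i. i \<notin> V \<longrightarrow> e' i = (g(v := e v)) i"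
      using insert.prems(2) by (auto simp: Ad_def)
    show "\<forall>e'\<in>Ad (e v). \<forall>i\<in>V. e' i < CARD('a)" using insert.prems(3) by (auto simp: Ad_def)
    show "e \<in> Ad (e v)" using insert.prems(5) by (simp add: Ad_def)
  qed
qed


lemma fsum_apply: "(\<Sum>e\<in>S. G e) P = (\<Sum>e\<in>S. G e P)"
  by (induction S rule: infinite_finite_induct) auto

lemma proj_pts_iff:
  "P \<in> proj_pts n \<longleftrightarrow> (\<forall>i>n. P i = 0) \<and> (\<exists>j\<le>n. P j = 1 \<and> (\<forall>i<j. P i = 0))"
proof
  assume P: "P \<in> proj_pts n"
  then obtain i where i: "i \<le> n" "P i \<noteq> 0" by (auto simp: proj_pts_def)
  define j where "j = (LEAST i. P i \<noteq> 0)"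
  have "j \<le> i" unfolding j_def using i by (intro Least_le) auto
  moreover have "\<forall>i'<j. P i' = 0" unfolding j_def using not_less_Least by blast
  moreover have "P j = 1" using P by (simp add: proj_pts_def j_def)
  moreover have "\<forall>i>n. P i = 0" using P by (simp add: proj_pts_def)
  ultimately show "(\<forall>i>n. P i = 0) \<and> (\<exists>j\<le>n. P j = 1 \<and> (\<forall>i<j. P i = 0))"
    using i(1) by (blast intro: le_trans)
next
  assume "(\<forall>i>n. P i = 0) \<and> (\<exists>j\<le>n. P j = 1 \<and> (\<forall>i<j. P i = 0))"
  then obtain j where j: "\<forall>i>n. P i = 0" "j \<le> n" "P j = 1" "\<forall>i<j. P i = 0" by blast
  have "(LEAST i. P i \<noteq> 0) = j"
    by (rule Least_equality) (use j in \<open>auto simp: not_less[symmetric]\<close>)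
  moreover have "\<exists>i\<le>n. P i \<noteq> 0" using j by (intro exI[of _ j]) simp
  ultimately show "P \<in> proj_pts n" using j(1,3) unfolding proj_pts_def by simp
qed

definition trunc :: "nat \<Rightarrow> (nat \<Rightarrow> 'b::zero) \<Rightarrow> nat \<Rightarrow> 'b" where
  "trunc n e = (\<lambda>i. if i \<le> n then e i else 0)"

lemma finite_proj_pts: "finite (proj_pts n :: (nat \<Rightarrow> 'a::{field,finite}) set)"
proof (rule finite_subset)
  show "proj_pts n \<subseteq> trunc n ` (PiE {..n} (\<lambda>_. (UNIV::'a set)))"
  proof
    fix P :: "nat \<Rightarrow> 'a" assume "P \<in> proj_pts n"
    hence eqP: "P = trunc n (restrict P {..n})" by (auto simp: proj_pts_def trunc_def fun_eq_iff)
    show "P \<in> trunc n ` (PiE {..n} (\<lambda>_. UNIV))" by (rule image_eqI[where f="trunc n" and x="restrict P {..n}", OF eqP]) simp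
  qed
qed (rule finite_imageI, rule finite_PiE, simp_all)

lemma finite_hmonos: "finite (hmonos n k)"
proof (rule finite_subset)
  show "hmonos n k \<subseteq> trunc n ` (PiE {..n} (\<lambda>_. {..k}))"
  proof
    fix e assume e: "e \<in> hmonos n k"
    hence "e = trunc n (restrict e {..n})" by (auto simp: hmonos_def trunc_def fun_eq_iff)
    moreover have "restrict e {..n} \<in> PiE {..n} (\<lambda>_. {..k})"
    proof -
      have "e i \<le> k" if "i \<le> n" for i
        using e member_le_sum[of i "{..n}" e] that by (auto simp: hmonos_def)
      thus ?thesis by auto
    qed
    ultimately show "e \<in> trunc n ` (PiE {..n} (\<lambda>_. {..k}))" by (rule image_eqI)
  qed
qed (rule finite_imageI, rule finite_PiE, simp_all)

lemma mono_eval_scale: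
  assumes "e \<in> hmonos n k"
  shows "mono_eval n e (\<lambda>i. l * P i) = l ^ k * mono_eval n e P"
proof -
  have "mono_eval n e (\<lambda>i. l * P i) = (\<Prod>i\<le>n. l ^ e i) * (\<Prod>i\<le>n. P i ^ e i)"
    by (simp add: mono_eval_def power_mult_distrib prod.distrib)
  also have "(\<Prod>i\<le>n. l ^ e i) = l ^ k" using assms by (simp add: power_sum[symmetric] hmonos_def)
  finally show ?thesis by (simp add: mono_eval_def)
qed

lemma mono_eval_trunc: "mono_eval n e (trunc n p) = mono_eval n e p"
  by (simp add: mono_eval_def trunc_def)

lemma hom_vanish_all:
  fixes c :: "(nat \<Rightarrow> nat) \<Rightarrow> 'a::{field,finite}"
  assumes k: "k \<ge> 1" and van: "\<forall>P\<in>proj_pts n. hom_eval n k c P = 0"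
  shows "hom_eval n k c p = 0"
proof -
  have h: "hom_eval n k c p = hom_eval n k c (trunc n p)"
    by (simp add: hom_eval_def mono_eval_trunc)
  show ?thesis
  proof (cases "\<forall>i. trunc n p i = 0")
    case True
    have "mono_eval n e (trunc n p) = 0" if e: "e \<in> hmonos n k" for e
    proof -
      have "(\<Sum>i\<le>n. e i) \<noteq> 0" using e k by (simp add: hmonos_def)
      then obtain i where "i \<in> {..n}" "e i \<noteq> 0" by (rule sum.not_neutral_contains_not_neutral)
      thus ?thesis using True unfolding mono_eval_def
        by (intro prod_zero) (auto intro!: bexI[of _ i])
    qed
    thus ?thesis using h by (simp add: hom_eval_def)
  next
    case False
    define q where "q = trunc n p"
    define j where "j = (LEAST i. q i \<noteq> 0)"
    have "\<exists>i. q i \<noteq> 0" using False by (simp add: q_def)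
    hence qj: "q j \<noteq> 0" unfolding j_def by (rule LeastI_ex)
    have jn: "j \<le> n" using qj by (simp add: q_def trunc_def split: if_splits)
    have below: "\<forall>i<j. q i = 0" unfolding j_def using not_less_Least by blast
    define P where "P = (\<lambda>i. q i / q j)"
    have qgt: "\<forall>i>n. q i = 0" by (simp add: q_def trunc_def)
    have "P \<in> proj_pts n" unfolding proj_pts_iff
    proof (intro conjI exI[of _ j])
      show "\<forall>i>n. P i = 0" using qgt by (simp add: P_def)
      show "\<forall>i<j. P i = 0" using below by (simp add: P_def)
      show "P j = 1" using qj by (simp add: P_def)
    qed (rule jn)
    have qP: "q = (\<lambda>i. q j * P i)" using qj by (simp add: P_def)
    have "hom_eval n k c (\<lambda>i. q j * P i) = q j ^ k * hom_eval n k c P"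
      unfolding hom_eval_def sum_distrib_left
      by (rule sum.cong[OF refl]) (simp add: mono_eval_scale)
    hence "hom_eval n k c q = q j ^ k * hom_eval n k c P" using qP by simp
    also have "\<dots> = 0" using van \<open>P \<in> proj_pts n\<close> by simp
    finally show ?thesis using h by (simp add: q_def)
  qed
qed

lemma hom_vanish_coeff:
  fixes c :: "(nat \<Rightarrow> nat) \<Rightarrow> 'a::{field,finite}"
  assumes k: "k \<ge> 1" "k < CARD('a)" and van: "\<forall>P\<in>proj_pts n. hom_eval n k c P = 0"
    and e: "e \<in> hmonos n k"
  shows "c e = 0"
proof (rule multi_zero[where V="{..n}" and A="hmonos n k" and g="\<lambda>_. 0" and c=c and e=e])
  show "\<forall>e\<in>hmonos n k. \<forall>i. i \<notin> {..n} \<longrightarrow> e i = 0" by (auto simp: hmonos_def)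
  show "\<forall>e\<in>hmonos n k. \<forall>i\<in>{..n}. e i < CARD('a)"
  proof (intro ballI)
    fix e i assume "e \<in> hmonos n k" "i \<in> {..n}"
    hence "e i \<le> k" using member_le_sum[of i "{..n}" e] by (auto simp: hmonos_def)
    thus "e i < CARD('a)" using k by linarith
  qed
  show "\<forall>p. (\<Sum>e\<in>hmonos n k. c e * (\<Prod>i\<in>{..n}. p i ^ e i)) = 0"
    using hom_vanish_all[OF k(1) van] by (simp add: hom_eval_def mono_eval_def)
qed (simp_all add: e finite_hmonos)


lemma atMost_insert: "{..n} = insert n {..<n::nat}" by auto

lemma upd_proj:
  assumes "\<exists>i<n. P i \<noteq> 0" "P \<in> proj_pts n"
  shows "P(n:=t) \<in> proj_pts n"
proof -
  obtain j where j: "\<forall>i>n. P i = 0" "j \<le> n" "P j = 1" "\<forall>i<j. P i = 0"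
    using assms(2) unfolding proj_pts_iff by blast
  have "j < n" using assms(1) j by (metis le_neq_implies_less)
  thus ?thesis unfolding proj_pts_iff using j by (intro conjI exI[of _ j]) auto
qed

lemma proj_minus_en:
  "proj_pts n - {(\<lambda>i. if i = n then 1 else 0)} = {P \<in> proj_pts n. \<exists>i<n. P i \<noteq> 0}"
proof (intro equalityI subsetI)
  fix P assume P: "P \<in> proj_pts n - {(\<lambda>i. if i = n then 1 else 0)}"
  show "P \<in> {P \<in> proj_pts n. \<exists>i<n. P i \<noteq> 0}"
  proof (rule ccontr)
    assume "P \<notin> {P \<in> proj_pts n. \<exists>i<n. P i \<noteq> 0}"
    hence z: "\<forall>i<n. P i = 0" using P by auto
    obtain j where j: "\<forall>i>n. P i = 0" "j \<le> n" "P j = 1" "\<forall>i<j. P i = 0"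
      using DiffD1[OF P] unfolding proj_pts_iff by blast
    have "j = n" using z j by (metis le_neq_implies_less one_neq_zero)
    hence "P = (\<lambda>i. if i = n then 1 else 0)" using z j
      by (auto simp: fun_eq_iff) (metis linorder_neqE_nat)
    thus False using P by auto
  qed
next
  fix P assume "P \<in> {P \<in> proj_pts n. \<exists>i<n. P i \<noteq> 0}"
  thus "P \<in> proj_pts n - {(\<lambda>i. if i = n then 1 else 0)}" by auto
qed

lemma en_in_proj: "(\<lambda>i. if i = n then 1 else 0) \<in> proj_pts n"
  unfolding proj_pts_iff by (intro conjI exI[of _ n]) auto

lemma mono_eval_en:
  "mono_eval n a (\<lambda>i. if i = n then (1::'a::field) else 0) = (if \<forall>i<n. a i = 0 then 1 else 0)"
proof -
  have "mono_eval n a (\<lambda>i. if i = n then (1::'a) else 0) = (\<Prod>i<n. (0::'a) ^ a i)"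
    unfolding mono_eval_def atMost_insert by (simp add: prod.insert)
  also have "\<dots> = (if \<forall>i<n. a i = 0 then 1 else 0)"
  proof (cases "\<forall>i<n. a i = 0")
    case True thus ?thesis by simp
  next
    case False
    then obtain i where "i < n" "a i \<noteq> 0" by blast
    thus ?thesis using False by (intro trans[OF prod_zero]) (auto intro!: bexI[of _ i])
  qed
  finally show ?thesis .
qed

lemma proj_sum_mono:
  fixes a :: "nat \<Rightarrow> nat"
  assumes an: "a n < CARD('a) - 1"
  shows "(\<Sum>P\<in>(proj_pts n :: (nat \<Rightarrow> 'a::{field,finite}) set). mono_eval n a P)
         = (if \<forall>i<n. a i = 0 then 1 else 0)"
proof -
  define en :: "nat \<Rightarrow> 'a" where "en = (\<lambda>i. if i = n then 1 else 0)"
  define Q where "Q = {P \<in> (proj_pts n :: (nat \<Rightarrow> 'a) set). \<exists>i<n. P i \<noteq> 0}"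
  define Q0 where "Q0 = {P \<in> Q. P n = 0}"
  have "(\<Sum>P\<in>proj_pts n. mono_eval n a P) = mono_eval n a en + (\<Sum>P\<in>proj_pts n - {en}. mono_eval n a P)"
    unfolding en_def by (rule sum.remove[OF finite_proj_pts en_in_proj])
  also have "proj_pts n - {en} = Q" unfolding en_def Q_def by (rule proj_minus_en)
  also have "(\<Sum>P\<in>Q. mono_eval n a P) = (\<Sum>(P,t)\<in>Q0 \<times> UNIV. mono_eval n a (P(n:=t)))"
    by (rule sum.reindex_bij_witness[of _ "\<lambda>(P,t). P(n:=t)" "\<lambda>P. (P(n:=0), P n)"])
       (auto simp: Q0_def Q_def fun_eq_iff intro!: upd_proj)
  also have "\<dots> = (\<Sum>P\<in>Q0. \<Sum>t\<in>UNIV. mono_eval n a (P(n:=t)))"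
    by (rule sum.cartesian_product[symmetric])
  also have "\<dots> = 0"
  proof (rule sum.neutral, rule ballI)
    fix P assume "P \<in> Q0"
    have "mono_eval n a (P(n:=t)) = (\<Prod>i<n. P i ^ a i) * t ^ a n" for t
      unfolding mono_eval_def atMost_insert by (simp add: prod.insert mult.commute)
    hence "(\<Sum>t\<in>UNIV. mono_eval n a (P(n:=t))) = (\<Prod>i<n. P i ^ a i) * (\<Sum>t\<in>UNIV. t ^ a n)"
      by (simp add: sum_distrib_left)
    also have "\<dots> = 0" using power_sum_zero[OF an] by simp
    finally show "(\<Sum>t\<in>UNIV. mono_eval n a (P(n:=t))) = 0" .
  qed
  finally show ?thesis unfolding en_def by (simp add: mono_eval_en)
qed


lemma card_hmonos: "card (hmonos n k) = (n + k choose k)"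
proof (induction n arbitrary: k)
  case 0
  have "hmonos 0 k = {(\<lambda>i. if i = 0 then k else 0)}"
    by (auto simp: hmonos_def fun_eq_iff)
  thus ?case by simp
next
  case (Suc n)
  define F where "F d = {e \<in> hmonos (Suc n) k. e (Suc n) = d}" for d
  have U: "hmonos (Suc n) k = (\<Union>d\<in>{..k}. F d)"
  proof (intro equalityI subsetI)
    fix e assume e: "e \<in> hmonos (Suc n) k"
    hence "e (Suc n) \<le> k" using member_le_sum[of "Suc n" "{..Suc n}" e] by (auto simp: hmonos_def)
    thus "e \<in> (\<Union>d\<in>{..k}. F d)" using e by (auto simp: F_def)
  qed (auto simp: F_def)
  have finF: "finite (F d)" for d using finite_hmonos[of "Suc n" k] by (simp add: F_def)
  have cF: "card (F d) = card (hmonos n (k - d))" if d: "d \<le> k" for d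
  proof (rule bij_betw_same_card, rule bij_betw_byWitness[where f'="\<lambda>e. e(Suc n := d)"])
    show "\<forall>e\<in>F d. (e(Suc n := 0))(Suc n := d) = e" by (auto simp: F_def fun_eq_iff)
    show "\<forall>e\<in>hmonos n (k - d). (e(Suc n := d))(Suc n := 0) = e" by (auto simp: hmonos_def fun_eq_iff)
    show "(\<lambda>e. e(Suc n := 0)) ` F d \<subseteq> hmonos n (k - d)"
    proof
      fix x assume "x \<in> (\<lambda>e. e(Suc n := 0)) ` F d"
      then obtain e where e: "e \<in> F d" "x = e(Suc n := 0)" by blast
      have "(\<Sum>i\<le>n. x i) = (\<Sum>i\<le>n. e i)" using e(2) by (intro sum.cong) auto
      moreover have "(\<Sum>i\<le>n. e i) + d = k" using e(1) by (simp add: F_def hmonos_def)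
      ultimately show "x \<in> hmonos n (k - d)" using e by (auto simp: F_def hmonos_def)
    qed
    show "(\<lambda>e. e(Suc n := d)) ` hmonos n (k - d) \<subseteq> F d"
    proof
      fix x assume "x \<in> (\<lambda>e. e(Suc n := d)) ` hmonos n (k - d)"
      then obtain e where e: "e \<in> hmonos n (k - d)" "x = e(Suc n := d)" by blast
      have "(\<Sum>i\<le>n. x i) = (\<Sum>i\<le>n. e i)" using e(2) by (intro sum.cong) auto
      hence "(\<Sum>i\<le>Suc n. x i) = k" using e d by (simp add: hmonos_def)
      thus "x \<in> F d" using e by (auto simp: F_def hmonos_def)
    qed
  qed
  have "card (hmonos (Suc n) k) = (\<Sum>d\<le>k. card (F d))"
    unfolding U by (rule card_UN_disjoint) (use finF in \<open>auto simp: F_def\<close>)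
  also have "\<dots> = (\<Sum>d\<le>k. (n + (k - d)) choose (k - d))"
    using cF Suc.IH by simp
  also have "\<dots> = (\<Sum>j\<le>k. (n + j) choose j)"
    by (rule sum.reindex_bij_witness[of _ "\<lambda>j. k - j" "\<lambda>j. k - j"]) auto
  also have "\<dots> = Suc n + k choose k" by (simp add: sum_choose_lower)
  finally show ?case .
qed

definition evm :: "nat \<Rightarrow> (nat \<Rightarrow> nat) \<Rightarrow> (nat \<Rightarrow> 'a::field) \<Rightarrow> 'a" where
  "evm n m = ev n (mono_eval n m)"

definition enk :: "nat \<Rightarrow> nat \<Rightarrow> nat \<Rightarrow> nat" where
  "enk n k = (\<lambda>i. if i = n then k else 0)"

lemma enk_in: "enk n k \<in> hmonos n k"
  by (simp add: enk_def hmonos_def)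

lemma hm_enk:
  assumes "e \<in> hmonos n k"
  shows "(\<forall>i<n. e i = 0) \<longleftrightarrow> e = enk n k"
proof
  assume z: "\<forall>i<n. e i = 0"
  have "(\<Sum>i\<le>n. e i) = e n" unfolding atMost_insert using z by simp
  show "e = enk n k"
  proof (rule ext)
    fix i show "e i = enk n k i"
    proof (cases i n rule: linorder_cases)
      case less thus ?thesis using z by (simp add: enk_def)
    next
      case equal thus ?thesis using assms \<open>(\<Sum>i\<le>n. e i) = e n\<close> by (simp add: enk_def hmonos_def)
    next
      case greater thus ?thesis using assms by (simp add: enk_def hmonos_def)
    qed
  qed
qed (simp add: enk_def)

lemma ev_hom_sum:
  "ev n (hom_eval n k c) = (\<Sum>e\<in>hmonos n k. fscale (c e) (evm n e))"
  by (rule ext) (simp add: fsum_apply ev_def fscale_def evm_def hom_eval_def)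

lemma fscale_simps: "fscale 1 f = f" "fscale (-1) f = - f" "fscale 0 f = 0"
  by (auto simp: fscale_def fun_eq_iff)

lemma lin_core:
  fixes u :: "(nat \<Rightarrow> nat) \<Rightarrow> 'a::{field,finite}"
  assumes k: "k \<ge> 1" "k < CARD('a)" and S: "finite S" "S \<subseteq> hmonos n k"
    and z: "(\<Sum>e\<in>S. fscale (u e) (evm n e)) = (0 :: (nat \<Rightarrow> 'a) \<Rightarrow> 'a)" and e: "e \<in> S"
  shows "u e = 0"
proof -
  define c where "c e = (if e \<in> S then u e else 0)" for e
  have "\<forall>P\<in>proj_pts n. hom_eval n k c P = 0"
  proof
    fix P :: "nat \<Rightarrow> 'a" assume P: "P \<in> proj_pts n"
    have "hom_eval n k c P = (\<Sum>e\<in>S. u e * mono_eval n e P)"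
      unfolding hom_eval_def
      by (rule sum.mono_neutral_cong_right) (use S in \<open>auto simp: c_def finite_hmonos\<close>)
    also have "\<dots> = (\<Sum>e\<in>S. fscale (u e) (evm n e)) P"
      using P by (simp add: fsum_apply fscale_def evm_def ev_def)
    finally show "hom_eval n k c P = 0" using z by simp
  qed
  hence "c e = 0" using hom_vanish_coeff[OF k] e S by blast
  thus ?thesis using e by (simp add: c_def)
qed

lemma evm_inj:
  assumes k: "k \<ge> 1" "k < CARD('a)"
  shows "inj_on (evm n :: _ \<Rightarrow> (nat \<Rightarrow> 'a::{field,finite}) \<Rightarrow> 'a) (hmonos n k)"
proof (rule inj_onI, rule ccontr)
  fix e1 e2 assume e: "e1 \<in> hmonos n k" "e2 \<in> hmonos n k"
    and eq: "(evm n e1 :: (nat \<Rightarrow> 'a) \<Rightarrow> 'a) = evm n e2" and ne: "e1 \<noteq> e2"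
  define u :: "(nat \<Rightarrow> nat) \<Rightarrow> 'a" where "u e = (if e = e1 then 1 else -1)" for e
  have "(\<Sum>e\<in>{e1,e2}. fscale (u e) (evm n e)) = (0 :: (nat \<Rightarrow> 'a) \<Rightarrow> 'a)"
    using ne eq by (simp add: u_def fscale_simps)
  note z = this
  have "u e1 = 0" by (rule lin_core[OF k _ _ z]) (use e in auto)
  thus False by (simp add: u_def)
qed

lemma evm_indep:
  assumes k: "k \<ge> 1" "k < CARD('a)" and S: "S \<subseteq> hmonos n k"
  shows "module.independent fscale ((evm n :: _ \<Rightarrow> (nat \<Rightarrow> 'a::{field,finite}) \<Rightarrow> 'a) ` S)"
proof
  interpret V: vector_space "fscale :: 'a \<Rightarrow> ((nat \<Rightarrow> 'a) \<Rightarrow> 'a) \<Rightarrow> _" by (rule vector_space_fscale)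
  have finS: "finite S" by (rule finite_subset[OF S finite_hmonos])
  have inj: "inj_on (evm n :: _ \<Rightarrow> (nat \<Rightarrow> 'a) \<Rightarrow> 'a) S" by (rule inj_on_subset[OF evm_inj[OF k] S])
  assume "V.dependent ((evm n :: _ \<Rightarrow> (nat \<Rightarrow> 'a) \<Rightarrow> 'a) ` S)"
  hence "\<exists>u. (\<exists>v\<in>evm n ` S. u v \<noteq> 0) \<and> (\<Sum>v\<in>(evm n :: _ \<Rightarrow> (nat \<Rightarrow> 'a) \<Rightarrow> 'a) ` S. fscale (u v) v) = 0"
    unfolding V.dependent_finite[OF finite_imageI[OF finS]] .
  then obtain u where uu: "(\<exists>v\<in>evm n ` S. u v \<noteq> 0) \<and> (\<Sum>v\<in>(evm n :: _ \<Rightarrow> (nat \<Rightarrow> 'a) \<Rightarrow> 'a) ` S. fscale (u v) v) = 0"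
    by (rule exE)
  note u = conjunct1[OF uu] conjunct2[OF uu]
  have "(\<Sum>e\<in>S. fscale (u (evm n e)) (evm n e)) = (0 :: (nat \<Rightarrow> 'a) \<Rightarrow> 'a)"
    unfolding u(2)[symmetric] by (rule sum.reindex_cong[OF inj refl, symmetric]) (rule refl)
  note Z = this
  from u(1) obtain v where v: "v \<in> evm n ` S" "u v \<noteq> 0" by (rule bexE)
  from v(1) obtain e where e: "v = evm n e" "e \<in> S" by (rule imageE)
  have "u (evm n e) = 0" by (rule lin_core[where u="\<lambda>e. u (evm n e)", OF k finS S Z e(2)])
  thus False using v e by simp
qed

lemma evm_span:
  assumes k: "k \<ge> 1" "k < CARD('a)" and S: "S \<subseteq> hmonos n k"
  shows "x \<in> module.span fscale ((evm n :: _ \<Rightarrow> (nat \<Rightarrow> 'a::{field,finite}) \<Rightarrow> 'a) ` S)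
     \<longleftrightarrow> (\<exists>w. x = (\<Sum>e\<in>S. fscale (w e) (evm n e)))"
    (is "?L \<longleftrightarrow> ?R")
proof -
  interpret V: vector_space "fscale :: 'a \<Rightarrow> ((nat \<Rightarrow> 'a) \<Rightarrow> 'a) \<Rightarrow> _" by (rule vector_space_fscale)
  have finS: "finite S" by (rule finite_subset[OF S finite_hmonos])
  have inj: "inj_on (evm n :: _ \<Rightarrow> (nat \<Rightarrow> 'a) \<Rightarrow> 'a) S" by (rule inj_on_subset[OF evm_inj[OF k] S])
  note SF = V.span_finite[OF finite_imageI[OF finS], of "evm n"]
  show ?thesis
  proof
    assume ?L
    hence "x \<in> range (\<lambda>u. \<Sum>v\<in>(evm n :: _ \<Rightarrow> (nat \<Rightarrow> 'a) \<Rightarrow> 'a) ` S. fscale (u v) v)"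
      unfolding SF .
    then obtain u where "x = (\<Sum>v\<in>(evm n :: _ \<Rightarrow> (nat \<Rightarrow> 'a) \<Rightarrow> 'a) ` S. fscale (u v) v)"
      by (rule rangeE)
    also have "\<dots> = (\<Sum>e\<in>S. fscale (u (evm n e)) (evm n e))"
      by (rule sum.reindex_cong[OF inj refl]) (rule refl)
    finally show ?R by (intro exI[of _ "\<lambda>e. u (evm n e)"])
  next
    assume ?R
    then obtain w where w: "x = (\<Sum>e\<in>S. fscale (w e) (evm n e))" by (rule exE)
    define u where "u v = w (the_inv_into S (evm n :: _ \<Rightarrow> (nat \<Rightarrow> 'a) \<Rightarrow> 'a) v)" for v
    have "x = (\<Sum>v\<in>(evm n :: _ \<Rightarrow> (nat \<Rightarrow> 'a) \<Rightarrow> 'a) ` S. fscale (u v) v)"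
      unfolding w
      by (rule sum.reindex_cong[OF inj refl, symmetric]) (simp add: u_def the_inv_into_f_f[OF inj])
    hence "x \<in> range (\<lambda>u. \<Sum>v\<in>(evm n :: _ \<Rightarrow> (nat \<Rightarrow> 'a) \<Rightarrow> 'a) ` S. fscale (u v) v)"
      by (rule range_eqI[where x=u])
    thus ?L unfolding SF .
  qed
qed


lemma dot_mono_sum:
  assumes e: "e \<in> hmonos n k" "e' \<in> hmonos n k" and q: "2 * k < CARD('a) - 1"
  shows "(\<Sum>P\<in>(proj_pts n :: (nat \<Rightarrow> 'a::{field,finite}) set). mono_eval n e P * mono_eval n e' P)
    = (if e = enk n k \<and> e' = enk n k then 1 else 0)"
proof -
  have m: "mono_eval n e P * mono_eval n e' P = mono_eval n (\<lambda>i. e i + e' i) P" for P :: "nat \<Rightarrow> 'a"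
    by (simp add: mono_eval_def power_add prod.distrib)
  have "e n \<le> k" "e' n \<le> k" using e member_le_sum[of n "{..n}" e] member_le_sum[of n "{..n}" e']
    by (auto simp: hmonos_def)
  hence an: "e n + e' n < CARD('a) - 1" using q by linarith
  have "(\<forall>i<n. e i + e' i = 0) \<longleftrightarrow> (\<forall>i<n. e i = 0) \<and> (\<forall>i<n. e' i = 0)" by auto
  also have "\<dots> \<longleftrightarrow> e = enk n k \<and> e' = enk n k" using hm_enk[OF e(1)] hm_enk[OF e(2)] by simp
  finally have iff: "(\<forall>i<n. e i + e' i = 0) \<longleftrightarrow> e = enk n k \<and> e' = enk n k" .
  show ?thesis unfolding m proj_sum_mono[where a="\<lambda>i. e i + e' i", OF an] iff ..
qed

lemma dot_hom:
  assumes q: "2 * k < CARD('a) - 1"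
  shows "dotp n (ev n (hom_eval n k c1)) (ev n (hom_eval n k c2) :: (nat \<Rightarrow> 'a::{field,finite}) \<Rightarrow> 'a)
    = c1 (enk n k) * c2 (enk n k)"
proof -
  let ?A = "proj_pts n :: (nat \<Rightarrow> 'a) set"
  let ?M = "hmonos n k"
  have "dotp n (ev n (hom_eval n k c1)) (ev n (hom_eval n k c2) :: (nat \<Rightarrow> 'a) \<Rightarrow> 'a)
      = (\<Sum>P\<in>?A. hom_eval n k c1 P * hom_eval n k c2 P)"
    unfolding dotp_def by (rule sum.cong) (simp_all add: ev_def)
  also have "\<dots> = (\<Sum>P\<in>?A. \<Sum>e\<in>?M. \<Sum>e'\<in>?M. c1 e * c2 e' * (mono_eval n e P * mono_eval n e' P))"
    unfolding hom_eval_def sum_product by (simp add: mult_ac)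
  also have "\<dots> = (\<Sum>e\<in>?M. \<Sum>P\<in>?A. \<Sum>e'\<in>?M. c1 e * c2 e' * (mono_eval n e P * mono_eval n e' P))"
    by (rule sum.swap)
  also have "\<dots> = (\<Sum>e\<in>?M. \<Sum>e'\<in>?M. \<Sum>P\<in>?A. c1 e * c2 e' * (mono_eval n e P * mono_eval n e' P))"
    by (rule sum.cong[OF refl], rule sum.swap)
  also have "\<dots> = (\<Sum>e\<in>?M. \<Sum>e'\<in>?M. c1 e * c2 e' * (if e = enk n k \<and> e' = enk n k then 1 else 0))"
    by (intro sum.cong refl) (simp add: sum_distrib_left[symmetric] dot_mono_sum[OF _ _ q])
  also have "\<dots> = (\<Sum>e\<in>?M. \<Sum>e'\<in>?M. if e' = enk n k then (if e = enk n k then c1 e * c2 e' else 0) else 0)"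
    by (intro sum.cong refl) simp
  also have "\<dots> = c1 (enk n k) * c2 (enk n k)"
    by (simp add: finite_hmonos enk_in)
  finally show ?thesis .
qed

lemma PRM_span:
  assumes k: "k \<ge> 1" "k < CARD('a)"
  shows "(PRM n k :: ((nat \<Rightarrow> 'a::{field,finite}) \<Rightarrow> 'a) set)
     = module.span fscale ((evm n :: _ \<Rightarrow> (nat \<Rightarrow> 'a) \<Rightarrow> 'a) ` hmonos n k)"
proof (intro set_eqI)
  fix x :: "(nat \<Rightarrow> 'a) \<Rightarrow> 'a"
  have "x \<in> PRM n k \<longleftrightarrow> (\<exists>c. x = ev n (hom_eval n k c))" by (auto simp: PRM_def)
  also have "\<dots> \<longleftrightarrow> (\<exists>w. x = (\<Sum>e\<in>hmonos n k. fscale (w e) (evm n e)))" by (simp add: ev_hom_sum)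
  also have "\<dots> \<longleftrightarrow> x \<in> module.span fscale ((evm n :: _ \<Rightarrow> (nat \<Rightarrow> 'a) \<Rightarrow> 'a) ` hmonos n k)"
    by (rule evm_span[OF k subset_refl, symmetric])
  finally show "x \<in> PRM n k \<longleftrightarrow> x \<in> module.span fscale ((evm n :: _ \<Rightarrow> (nat \<Rightarrow> 'a) \<Rightarrow> 'a) ` hmonos n k)" .
qed


lemma sum_minus_enk:
  "(\<Sum>e\<in>hmonos n k. fscale (c e) (evm n e)) = fscale (c (enk n k)) (evm n (enk n k))
     + (\<Sum>e\<in>hmonos n k - {enk n k}. fscale (c e) (evm n e))"
  by (rule sum.remove[OF finite_hmonos enk_in])

lemma hull_span:
  assumes k: "k \<ge> 1" "2 * k + 1 < CARD('a)"
  shows "code_hull n (PRM n k :: ((nat \<Rightarrow> 'a::{field,finite}) \<Rightarrow> 'a) set)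
     = module.span fscale ((evm n :: _ \<Rightarrow> (nat \<Rightarrow> 'a) \<Rightarrow> 'a) ` (hmonos n k - {enk n k}))"
proof (intro set_eqI iffI)
  have k': "k \<ge> 1" "k < CARD('a)" using k by auto
  have q: "2 * k < CARD('a) - 1" using k by linarith
  have S: "hmonos n k - {enk n k} \<subseteq> hmonos n k" by auto
  fix x :: "(nat \<Rightarrow> 'a) \<Rightarrow> 'a"
  {
    assume x: "x \<in> code_hull n (PRM n k)"
    then obtain c where c: "x = ev n (hom_eval n k c)" by (auto simp: code_hull_def PRM_def)
    define c1 :: "(nat \<Rightarrow> nat) \<Rightarrow> 'a" where "c1 e = (if e = enk n k then 1 else 0)" for e
    have "ev n (hom_eval n k c1) \<in> (PRM n k :: ((nat \<Rightarrow> 'a) \<Rightarrow> 'a) set)" by (auto simp: PRM_def)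
    hence "dotp n (ev n (hom_eval n k c1)) x = 0" using x by (auto simp: code_hull_def dual_code_def)
    hence c0: "c (enk n k) = 0" using dot_hom[OF q, of n c1 c] c by (simp add: c1_def)
    have "x = (\<Sum>e\<in>hmonos n k - {enk n k}. fscale (c e) (evm n e))"
      unfolding c ev_hom_sum sum_minus_enk by (simp add: c0 fscale_simps)
    thus "x \<in> module.span fscale ((evm n :: _ \<Rightarrow> (nat \<Rightarrow> 'a) \<Rightarrow> 'a) ` (hmonos n k - {enk n k}))"
      using evm_span[OF k' S] by (intro iffD2[OF evm_span[OF k' S]] exI[of _ c])
  next
    assume "x \<in> module.span fscale ((evm n :: _ \<Rightarrow> (nat \<Rightarrow> 'a) \<Rightarrow> 'a) ` (hmonos n k - {enk n k}))"
    hence "\<exists>w. x = (\<Sum>e\<in>hmonos n k - {enk n k}. fscale (w e) (evm n e))"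
      by (rule iffD1[OF evm_span[OF k' S]])
    then obtain w where w: "x = (\<Sum>e\<in>hmonos n k - {enk n k}. fscale (w e) (evm n e))"
      by (rule exE)
    define c where "c e = (if e = enk n k then 0 else w e)" for e
    have "x = (\<Sum>e\<in>hmonos n k. fscale (c e) (evm n e))"
      unfolding w sum_minus_enk by (simp add: c_def fscale_simps)
    hence xc: "x = ev n (hom_eval n k c)" by (simp add: ev_hom_sum)
    have "x \<in> PRM n k" unfolding xc PRM_def by auto
    moreover have "x \<in> dual_code n (PRM n k)"
      unfolding dual_code_def
    proof (intro CollectI conjI ballI)
      show "x \<in> words n" unfolding xc by (simp add: words_def ev_def)
      fix u assume "u \<in> (PRM n k :: ((nat \<Rightarrow> 'a) \<Rightarrow> 'a) set)"
      then obtain c' where u: "u = ev n (hom_eval n k c')" by (auto simp: PRM_def)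
      show "dotp n u x = 0" unfolding u xc dot_hom[OF q] by (simp add: c_def)
    qed
    ultimately show "x \<in> code_hull n (PRM n k)" by (simp add: code_hull_def)
  }
qed


theorem mainTheorem8:
  fixes n k :: nat
  assumes "n \<ge> 1" and "k \<ge> 1"
    and "card (UNIV :: 'a set) > 2 * k + 1"
  shows "vector_space.dim fscale (code_hull n (PRM n k :: ((nat \<Rightarrow> 'a::{field,finite}) \<Rightarrow> 'a) set))
           = vector_space.dim fscale (PRM n k :: ((nat \<Rightarrow> 'a) \<Rightarrow> 'a) set) - 1
       \<and> vector_space.dim fscale (PRM n k :: ((nat \<Rightarrow> 'a) \<Rightarrow> 'a) set) - 1
           = (n + k choose k) - 1
       \<and> inj_on (\<lambda>m. ev n (mono_eval n m) :: (nat \<Rightarrow> 'a) \<Rightarrow> 'a) (hmonos n k - {(\<lambda>i. if i = n then k else 0)})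
       \<and> module.independent fscale
           ((\<lambda>m. ev n (mono_eval n m) :: (nat \<Rightarrow> 'a) \<Rightarrow> 'a) ` (hmonos n k - {(\<lambda>i. if i = n then k else 0)}))
       \<and> module.span fscale
           ((\<lambda>m. ev n (mono_eval n m) :: (nat \<Rightarrow> 'a) \<Rightarrow> 'a) ` (hmonos n k - {(\<lambda>i. if i = n then k else 0)}))
           = code_hull n (PRM n k)"
proof -
  interpret V: vector_space "fscale :: 'a \<Rightarrow> ((nat \<Rightarrow> 'a) \<Rightarrow> 'a) \<Rightarrow> _" by (rule vector_space_fscale)
  have k: "k \<ge> 1" "2 * k + 1 < CARD('a)" using assms by auto
  have k': "k \<ge> 1" "k < CARD('a)" using k by auto
  have ev_eq: "(\<lambda>m. ev n (mono_eval n m) :: (nat \<Rightarrow> 'a) \<Rightarrow> 'a) = evm n"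
    by (simp add: evm_def fun_eq_iff)
  have enk_eq: "(\<lambda>i. if i = n then k else 0) = enk n k" by (simp add: enk_def)
  let ?M = "hmonos n k" and ?M' = "hmonos n k - {enk n k}"
  have S: "?M' \<subseteq> ?M" by auto
  have inj: "inj_on (evm n :: _ \<Rightarrow> (nat \<Rightarrow> 'a) \<Rightarrow> 'a) ?M" by (rule evm_inj[OF k'])
  have inj': "inj_on (evm n :: _ \<Rightarrow> (nat \<Rightarrow> 'a) \<Rightarrow> 'a) ?M'" by (rule inj_on_subset[OF inj S])
  have ind: "V.independent ((evm n :: _ \<Rightarrow> (nat \<Rightarrow> 'a) \<Rightarrow> 'a) ` ?M)" by (rule evm_indep[OF k' subset_refl])
  have ind': "V.independent ((evm n :: _ \<Rightarrow> (nat \<Rightarrow> 'a) \<Rightarrow> 'a) ` ?M')" by (rule evm_indep[OF k' S])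
  have PRM: "(PRM n k :: ((nat \<Rightarrow> 'a) \<Rightarrow> 'a) set) = V.span (evm n ` ?M)" by (rule PRM_span[OF k'])
  have HULL: "code_hull n (PRM n k :: ((nat \<Rightarrow> 'a) \<Rightarrow> 'a) set) = V.span (evm n ` ?M')"
    by (rule hull_span[OF k])
  have dP: "V.dim (PRM n k :: ((nat \<Rightarrow> 'a) \<Rightarrow> 'a) set) = card ?M"
  proof -
    have "V.dim (PRM n k :: ((nat \<Rightarrow> 'a) \<Rightarrow> 'a) set) = card ((evm n :: _ \<Rightarrow> (nat \<Rightarrow> 'a) \<Rightarrow> 'a) ` ?M)"
      by (rule V.dim_eq_card) (simp_all only: PRM V.span_span ind not_False_eq_True)
    also have "\<dots> = card ?M" by (rule card_image[OF inj])
    finally show ?thesis .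
  qed
  have dH: "V.dim (code_hull n (PRM n k :: ((nat \<Rightarrow> 'a) \<Rightarrow> 'a) set)) = card ?M'"
  proof -
    have "V.dim (code_hull n (PRM n k :: ((nat \<Rightarrow> 'a) \<Rightarrow> 'a) set)) = card ((evm n :: _ \<Rightarrow> (nat \<Rightarrow> 'a) \<Rightarrow> 'a) ` ?M')"
      by (rule V.dim_eq_card) (simp_all only: HULL V.span_span ind' not_False_eq_True)
    also have "\<dots> = card ?M'" by (rule card_image[OF inj'])
    finally show ?thesis .
  qed
  have cM': "card ?M' = card ?M - 1" by (simp add: card_Diff_singleton finite_hmonos enk_in)
  show ?thesis unfolding ev_eq enk_eq
    using dP dH cM' inj' ind' HULL card_hmonos[of n k] by simp
qed

end
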